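(* Let $X,Y$ be real Hilbert spaces, let $A\in\mathcal{L}(X,Y)$ be a compact operator with singular system $\{(\sigma_i,u_i,v_i)\}_i$, and let $\alpha>0$. For $B\in\mathcal{L}(X,Y)$ and $y\in Y$ let $$x(B,y)=\operatorname*{argmin}_{x\in X}\tfrac12\|Bx-y\|^2+\tfrac{\alpha}{2}\|x\|^2=(B^*B+\alpha I)^{-1}B^*y,$$ and let $F(B)=\tfrac12\|A\,x(B,y^\delta)-y^\delta\|^2$. Consider the class $\mathcal{B}$ of operators of the form $B=\sum_i \beta_i\, v_i u_i^*$ with $\beta_i\ge 0$ and $\sup_i\beta_i<\infty$. Then for every $y^\delta\in Y$ the operator $B_\alpha=\sum_i\beta_i^\alpha v_iu_i^*$ with $$\beta_i^\alpha=\begin{cases}\frac{\sigma_i}{2}+\sqrt{\frac{\sigma_i^2}{4}-\alpha}, & \sigma_i\ge 2\sqrt{\alpha},\\[2pt] \sqrt{\alpha}, & \sigma_i<2\sqrt{\alpha},\end{cases}$$ belongs to $\mathcal{B}$ and is a global minimizer of $F$ over $\mathcal{B}$.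
   Context: A singular system of the compact operator $A$ means: $\sigma_i>0$, $\{u_i\}$ orthonormal in $X$, $\{v_i\}$ orthonormal in $Y$, $Au_i=\sigma_i v_i$, $A^*v_i=\sigma_i u_i$, and $A=\sum_i\sigma_i v_iu_i^*$. For $v\in Y$, $u\in X$, $v u^*\in\mathcal{L}(X,Y)$ denotes the rank-one map $x\mapsto\langle u,x\rangle_X\, v$. $I$ is the identity on $X$. *)

theory Defs
  imports "HOL-Analysis.Analysis"
begin

definition compact_operator :: "('a::real_normed_vector \<Rightarrow>\<^sub>L 'b::real_normed_vector) \<Rightarrow> bool" where
  "compact_operator A \<longleftrightarrow> compact (closure (blinfun_apply A ` cball 0 1))"

text \<open>T = sum_i c_i v_i u_i^*, i.e. T x = sum_i c_i <u_i,x> v_i for all x (unconditional sum over I).\<close>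
definition op_series :: "'i set \<Rightarrow> ('i \<Rightarrow> real) \<Rightarrow> ('i \<Rightarrow> 'a::real_inner) \<Rightarrow> ('i \<Rightarrow> 'b::real_inner)
    \<Rightarrow> ('a \<Rightarrow> 'b) \<Rightarrow> bool" where
  "op_series I c u v T \<longleftrightarrow> (\<forall>x. ((\<lambda>i. (c i * inner (u i) x) *\<^sub>R v i) has_sum T x) I)"

definition orthonormal_on :: "'i set \<Rightarrow> ('i \<Rightarrow> 'a::real_inner) \<Rightarrow> bool" where
  "orthonormal_on I u \<longleftrightarrow> (\<forall>i\<in>I. \<forall>j\<in>I. inner (u i) (u j) = (if i = j then 1 else 0))"

text \<open>Singular system (sigma_i, u_i, v_i), i in I, of A. The adjoint relation A^* v_i = sigma_i u_i
  is written out via the defining property of the adjoint: <A x, v_i> = <x, sigma_i u_i> for all x.\<close>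
definition singular_system :: "('a::real_inner \<Rightarrow>\<^sub>L 'b::real_inner) \<Rightarrow> 'i set \<Rightarrow> ('i \<Rightarrow> real)
    \<Rightarrow> ('i \<Rightarrow> 'a) \<Rightarrow> ('i \<Rightarrow> 'b) \<Rightarrow> bool" where
  "singular_system A I \<sigma> u v \<longleftrightarrow>
     (\<forall>i\<in>I. \<sigma> i > 0) \<and> orthonormal_on I u \<and> orthonormal_on I v \<and>
     (\<forall>i\<in>I. blinfun_apply A (u i) = \<sigma> i *\<^sub>R v i) \<and>
     (\<forall>i\<in>I. \<forall>x. inner (blinfun_apply A x) (v i) = inner x (\<sigma> i *\<^sub>R u i)) \<and>
     op_series I \<sigma> u v (blinfun_apply A)"

definition tik_sol :: "real \<Rightarrow> ('a::real_inner \<Rightarrow>\<^sub>L 'b::real_inner) \<Rightarrow> 'b \<Rightarrow> 'a" where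
  "tik_sol \<alpha> B y = (THE x. \<forall>z.
      (1/2) * (norm (blinfun_apply B x - y))\<^sup>2 + (\<alpha>/2) * (norm x)\<^sup>2
      \<le> (1/2) * (norm (blinfun_apply B z - y))\<^sup>2 + (\<alpha>/2) * (norm z)\<^sup>2)"

definition F_obj :: "real \<Rightarrow> ('a::real_inner \<Rightarrow>\<^sub>L 'b::real_inner) \<Rightarrow> 'b
    \<Rightarrow> ('a \<Rightarrow>\<^sub>L 'b) \<Rightarrow> real" where
  "F_obj \<alpha> A y\<delta> B = (1/2) * (norm (blinfun_apply A (tik_sol \<alpha> B y\<delta>) - y\<delta>))\<^sup>2"

definition class_B :: "'i set \<Rightarrow> ('i \<Rightarrow> 'a::real_inner) \<Rightarrow> ('i \<Rightarrow> 'b::real_inner)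
    \<Rightarrow> ('a \<Rightarrow>\<^sub>L 'b) set" where
  "class_B I u v = {B. \<exists>\<beta>. (\<forall>i\<in>I. 0 \<le> \<beta> i) \<and> bdd_above (\<beta> ` I) \<and>
                          op_series I \<beta> u v (blinfun_apply B)}"

definition beta_alpha :: "real \<Rightarrow> real \<Rightarrow> real" where
  "beta_alpha \<alpha> s = (if s \<ge> 2 * sqrt \<alpha> then s / 2 + sqrt (s\<^sup>2 / 4 - \<alpha>) else sqrt \<alpha>)"

end

theory Submission
  imports Defs
begin

lemma on_pick_finite:
  assumes "orthonormal_on I e" "finite G" "G \<subseteq> I" "j \<in> G"
  shows "inner (e j) (\<Sum>i\<in>G. c i *\<^sub>R e i) = c j"
proof -
  have "inner (e j) (\<Sum>i\<in>G. c i *\<^sub>R e i) = (\<Sum>i\<in>G. c i * inner (e j) (e i))"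
    by (simp add: inner_sum_right)
  also have "\<dots> = (\<Sum>i\<in>G. if j = i then c i else 0)"
    using assms unfolding orthonormal_on_def by (intro sum.cong) (auto simp: subset_iff)
  also have "\<dots> = c j" using assms by simp
  finally show ?thesis .
qed

lemma on_pyth_finite:
  assumes "orthonormal_on I e" "finite G" "G \<subseteq> I"
  shows "(norm (\<Sum>i\<in>G. c i *\<^sub>R e i))\<^sup>2 = (\<Sum>i\<in>G. (c i)\<^sup>2)"
proof -
  let ?s = "\<Sum>i\<in>G. c i *\<^sub>R e i"
  have "(norm ?s)\<^sup>2 = inner ?s ?s" by (simp add: power2_norm_eq_inner)
  also have "\<dots> = (\<Sum>i\<in>G. c i * inner (e i) ?s)"
    by (simp add: inner_sum_left)
  also have "\<dots> = (\<Sum>i\<in>G. (c i)\<^sup>2)"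
    using on_pick_finite[OF assms] by (intro sum.cong) (auto simp: power2_eq_square)
  finally show ?thesis .
qed

lemma on_pick:
  assumes "orthonormal_on I e" "((\<lambda>i. c i *\<^sub>R e i) has_sum s) I" "j \<in> I"
  shows "inner (e j) s = c j"
proof -
  have h1: "((\<lambda>i. inner (e j) (c i *\<^sub>R e i)) has_sum inner (e j) s) I"
    by (rule has_sum_bounded_linear[OF bounded_linear_inner_right assms(2)])
  have eqv: "((\<lambda>i. inner (e j) (c i *\<^sub>R e i)) has_sum c j) I \<longleftrightarrow> ((\<lambda>i. c j) has_sum c j) {j}"
  proof (rule has_sum_cong_neutral)
    fix x assume "x \<in> I - {j}"
    then show "inner (e j) (c x *\<^sub>R e x) = 0"
      using assms(1,3) unfolding orthonormal_on_def by auto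
  next
    fix x assume "x \<in> {j} - I" then show "c j = 0" using assms(3) by blast
  next
    fix x assume "x \<in> I \<inter> {j}"
    then show "inner (e j) (c x *\<^sub>R e x) = c j"
      using assms(1,3) unfolding orthonormal_on_def by auto
  qed
  have "((\<lambda>i. c j) has_sum c j) {j}"
    using has_sum_finite[of "{j}" "\<lambda>i. c j"] by simp
  then have h2: "((\<lambda>i. inner (e j) (c i *\<^sub>R e i)) has_sum c j) I" using eqv by blast
  show ?thesis using has_sum_unique[OF h1 h2] .
qed

lemma on_norm_has_sum:
  assumes "orthonormal_on I e" "((\<lambda>i. c i *\<^sub>R e i) has_sum s) I"
  shows "((\<lambda>i. (c i)\<^sup>2) has_sum (norm s)\<^sup>2) I"
proof -
  have h1: "((\<lambda>i. inner s (c i *\<^sub>R e i)) has_sum inner s s) I"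
    by (rule has_sum_bounded_linear[OF bounded_linear_inner_right assms(2)])
  have eq: "inner s (c i *\<^sub>R e i) = (c i)\<^sup>2" if "i \<in> I" for i
  proof -
    have "inner s (c i *\<^sub>R e i) = c i * inner (e i) s" by (simp add: inner_commute)
    also have "\<dots> = (c i)\<^sup>2" using on_pick[OF assms that] by (simp add: power2_eq_square)
    finally show ?thesis .
  qed
  have "((\<lambda>i. inner s (c i *\<^sub>R e i)) has_sum inner s s) I \<longleftrightarrow> ((\<lambda>i. (c i)\<^sup>2) has_sum inner s s) I"
    by (rule has_sum_cong) (rule eq)
  then show ?thesis unfolding power2_norm_eq_inner using h1 by blast
qed

lemma bessel:
  assumes "orthonormal_on I e"
  shows "(\<lambda>i. (inner (e i) x)\<^sup>2) summable_on I"
    and "infsum (\<lambda>i. (inner (e i) x)\<^sup>2) I \<le> (norm x)\<^sup>2"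
proof -
  have fin: "(\<Sum>i\<in>G. (inner (e i) x)\<^sup>2) \<le> (norm x)\<^sup>2" if "finite G" "G \<subseteq> I" for G
  proof -
    let ?s = "\<Sum>i\<in>G. inner (e i) x *\<^sub>R e i"
    have n: "(norm ?s)\<^sup>2 = (\<Sum>i\<in>G. (inner (e i) x)\<^sup>2)"
      by (rule on_pyth_finite[OF assms that])
    have i: "inner ?s x = (\<Sum>i\<in>G. (inner (e i) x)\<^sup>2)"
      by (simp add: inner_sum_left power2_eq_square)
    have "0 \<le> (norm (x - ?s))\<^sup>2" by simp
    also have "\<dots> = (norm x)\<^sup>2 - 2 * inner ?s x + (norm ?s)\<^sup>2"
      by (simp add: power2_norm_eq_inner inner_diff_left inner_diff_right inner_commute)
    finally show ?thesis using n i by simp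
  qed
  show s: "(\<lambda>i. (inner (e i) x)\<^sup>2) summable_on I"
  proof (rule nonneg_bdd_above_summable_on)
    show "bdd_above (sum (\<lambda>i. (inner (e i) x)\<^sup>2) ` {F. F \<subseteq> I \<and> finite F})"
    proof (rule bdd_aboveI[where M="(norm x)\<^sup>2"])
      fix y assume "y \<in> sum (\<lambda>i. (inner (e i) x)\<^sup>2) ` {F. F \<subseteq> I \<and> finite F}"
      then obtain F where "F \<subseteq> I" "finite F" "y = sum (\<lambda>i. (inner (e i) x)\<^sup>2) F" by blast
      then show "y \<le> (norm x)\<^sup>2" using fin by simp
    qed
  qed simp
  show "infsum (\<lambda>i. (inner (e i) x)\<^sup>2) I \<le> (norm x)\<^sup>2"
    by (rule infsum_le_finite_sums[OF s fin])
qed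


lemma orth_summable:
  fixes e :: "'i \<Rightarrow> 'a::{real_inner,complete_space}"
  assumes on: "orthonormal_on I e" and sq: "(\<lambda>i. (c i)\<^sup>2) summable_on I"
  shows "(\<lambda>i. c i *\<^sub>R e i) summable_on I"
proof -
  let ?f = "\<lambda>i. c i *\<^sub>R e i"
  let ?g = "\<lambda>i. (c i)\<^sup>2"
  from sq obtain L where lim: "(sum ?g \<longlongrightarrow> L) (finite_subsets_at_top I)"
    unfolding summable_on_def has_sum_def by blast
  have "\<exists>P. eventually P (finite_subsets_at_top I) \<and>
              (\<forall>F F'. P F \<and> P F' \<longrightarrow> dist (sum ?f F) (sum ?f F') < \<epsilon>)" if "\<epsilon> > 0" for \<epsilon>
  proof -
    define d where "d = (\<epsilon>/4)\<^sup>2"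
    define P where "P F \<longleftrightarrow> finite F \<and> F \<subseteq> I \<and> dist (sum ?g F) L < d" for F
    have "d > 0" using that by (simp add: d_def)
    have ev_P: "eventually P (finite_subsets_at_top I)"
      using lim
      by (auto simp add: P_def[abs_def] \<open>0 < d\<close> eventually_conj_iff eventually_finite_subsets_at_top_weakI tendsto_iff)
    moreover have "dist (sum ?f F1) (sum ?f F2) < \<epsilon>" if "P F1" and "P F2" for F1 F2
    proof -
      from ev_P
      obtain F' where "finite F'" and "F' \<subseteq> I" and P_sup_F': "finite F \<and> F \<supseteq> F' \<and> F \<subseteq> I \<Longrightarrow> P F" for F
        by atomize_elim (simp add: eventually_finite_subsets_at_top)
      define F where "F = F' \<union> F1 \<union> F2"
      have "finite F" and "F \<subseteq> I"
        using F_def P_def[abs_def] that \<open>finite F'\<close> \<open>F' \<subseteq> I\<close> by auto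
      have dist_F: "dist (sum ?g F) L < d"
        by (metis F_def \<open>F \<subseteq> I\<close> P_def P_sup_F' \<open>finite F\<close> le_supE order_refl)
      have sub: "dist (sum ?f F) (sum ?f G) < \<epsilon>/2" if G: "G \<subseteq> F" "P G" for G
      proof -
        have eq1: "dist (sum ?f F) (sum ?f G) = norm (sum ?f (F-G))"
          unfolding dist_norm using \<open>finite F\<close> G by (subst sum_diff) auto
        have eq2: "(norm (sum ?f (F-G)))\<^sup>2 = sum ?g (F-G)"
          by (rule on_pyth_finite[OF on]) (use \<open>finite F\<close> \<open>F \<subseteq> I\<close> in auto)
        have eq3: "sum ?g (F-G) = sum ?g F - sum ?g G"
          using \<open>finite F\<close> G by (subst sum_diff) auto
        have lt1: "sum ?g F - sum ?g G < 2 * d"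
          using dist_F G unfolding P_def dist_real_def by linarith
        have lt2: "2 * d < (\<epsilon>/2)\<^sup>2" using \<open>\<epsilon> > 0\<close> by (simp add: d_def power2_eq_square)
        have "(norm (sum ?f (F-G)))\<^sup>2 < (\<epsilon>/2)\<^sup>2"
          using eq2 eq3 lt1 lt2 by linarith
        then have "norm (sum ?f (F-G)) < \<epsilon>/2"
          by (rule power2_less_imp_less) (use \<open>\<epsilon> > 0\<close> in simp)
        then show ?thesis using eq1 by simp
      qed
      have "dist (sum ?f F1) (sum ?f F2) \<le> dist (sum ?f F) (sum ?f F1) + dist (sum ?f F) (sum ?f F2)"
        by (rule dist_triangle3)
      also have "\<dots> < \<epsilon>/2 + \<epsilon>/2"
        by (intro add_strict_mono sub that) (auto simp: F_def)
      finally show ?thesis by simp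
    qed
    ultimately show ?thesis by blast
  qed
  then have cf: "cauchy_filter (filtermap (sum ?f) (finite_subsets_at_top I))"
    by (simp add: cauchy_filter_metric_filtermap)
  have cU: "complete (UNIV::'a set)"
    by (meson Cauchy_convergent UNIV_I complete_def convergent_def)
  have nb: "filtermap (sum ?f) (finite_subsets_at_top I) \<noteq> bot"
    by (simp add: filtermap_bot_iff)
  obtain L' where "filtermap (sum ?f) (finite_subsets_at_top I) \<le> nhds L'"
    using cauchy_filter_complete_converges[OF cf cU _ nb] by auto
  then have "(sum ?f \<longlongrightarrow> L') (finite_subsets_at_top I)"
    by (simp add: filterlim_def)
  then show ?thesis
    unfolding summable_on_def has_sum_def by blast
qed



lemma sq_comparison_summable:
  assumes "orthonormal_on I e" "\<And>i. i \<in> I \<Longrightarrow> \<bar>k i\<bar> \<le> M"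
  shows "(\<lambda>i. (k i * inner (e i) x)\<^sup>2) summable_on I"
proof (rule summable_on_comparison_test)
  show "(\<lambda>i. M\<^sup>2 * (inner (e i) x)\<^sup>2) summable_on I"
    by (rule summable_on_cmult_right[OF bessel(1)[OF assms(1)]])
  fix i assume i: "i \<in> I"
  have "\<bar>k i\<bar> \<le> \<bar>M\<bar>" using assms(2)[OF i] by linarith
  then have "(k i)\<^sup>2 \<le> M\<^sup>2" by (simp add: abs_le_square_iff)
  then show "(k i * inner (e i) x)\<^sup>2 \<le> M\<^sup>2 * (inner (e i) x)\<^sup>2"
    by (simp add: power_mult_distrib mult_right_mono)
qed simp

lemma series_op_exists:
  fixes u :: "'i \<Rightarrow> 'a::{real_inner,complete_space}" and v :: "'i \<Rightarrow> 'b::{real_inner,complete_space}"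
  assumes ou: "orthonormal_on I u" and ov: "orthonormal_on I v" and bd: "\<And>i. i \<in> I \<Longrightarrow> \<bar>\<beta> i\<bar> \<le> M"
  shows "\<exists>T::'a \<Rightarrow>\<^sub>L 'b. op_series I \<beta> u v (blinfun_apply T)"
proof -
  define f where "f x = infsum (\<lambda>i. (\<beta> i * inner (u i) x) *\<^sub>R v i) I" for x
  have hs: "((\<lambda>i. (\<beta> i * inner (u i) x) *\<^sub>R v i) has_sum f x) I" for x
  proof -
    have "(\<lambda>i. (\<beta> i * inner (u i) x) *\<^sub>R v i) summable_on I"
      by (rule orth_summable[OF ov sq_comparison_summable[OF ou bd]])
    then show ?thesis unfolding f_def by (simp add: summable_iff_has_sum_infsum)
  qed
  have add: "f (x + y) = f x + f y" for x y
  proof -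
    have "((\<lambda>i. (\<beta> i * inner (u i) x) *\<^sub>R v i + (\<beta> i * inner (u i) y) *\<^sub>R v i) has_sum (f x + f y)) I"
      by (rule has_sum_add[OF hs hs])
    moreover have "(\<lambda>i. (\<beta> i * inner (u i) x) *\<^sub>R v i + (\<beta> i * inner (u i) y) *\<^sub>R v i)
        = (\<lambda>i. (\<beta> i * inner (u i) (x + y)) *\<^sub>R v i)"
      by (rule ext) (simp add: inner_add_right distrib_left scaleR_add_left)
    ultimately show ?thesis using hs[of "x+y"] has_sum_unique by metis
  qed
  have scl: "f (r *\<^sub>R x) = r *\<^sub>R f x" for r x
  proof -
    have "((\<lambda>i. r *\<^sub>R ((\<beta> i * inner (u i) x) *\<^sub>R v i)) has_sum (r *\<^sub>R f x)) I"
      by (rule has_sum_scaleR[OF hs])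
    moreover have "(\<lambda>i. r *\<^sub>R ((\<beta> i * inner (u i) x) *\<^sub>R v i))
        = (\<lambda>i. (\<beta> i * inner (u i) (r *\<^sub>R x)) *\<^sub>R v i)"
      by (rule ext) (simp add: mult_ac)
    ultimately show ?thesis using hs[of "r *\<^sub>R x"] has_sum_unique by metis
  qed
  have nrm: "norm (f x) \<le> norm x * \<bar>M\<bar>" for x
  proof -
    have h1: "((\<lambda>i. (\<beta> i * inner (u i) x)\<^sup>2) has_sum (norm (f x))\<^sup>2) I"
      by (rule on_norm_has_sum[OF ov hs])
    have h2: "((\<lambda>i. M\<^sup>2 * (inner (u i) x)\<^sup>2) has_sum (M\<^sup>2 * infsum (\<lambda>i. (inner (u i) x)\<^sup>2) I)) I"
      by (rule has_sum_cmult_right) (use bessel(1)[OF ou] in \<open>simp add: summable_iff_has_sum_infsum\<close>)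
    have "(norm (f x))\<^sup>2 \<le> M\<^sup>2 * infsum (\<lambda>i. (inner (u i) x)\<^sup>2) I"
    proof (rule has_sum_mono[OF h1 h2])
      fix i assume i: "i \<in> I"
      have "\<bar>\<beta> i\<bar> \<le> \<bar>M\<bar>" using bd[OF i] by linarith
      then have "(\<beta> i)\<^sup>2 \<le> M\<^sup>2" by (simp add: abs_le_square_iff)
      then show "(\<beta> i * inner (u i) x)\<^sup>2 \<le> M\<^sup>2 * (inner (u i) x)\<^sup>2"
        by (simp add: power_mult_distrib mult_right_mono)
    qed
    also have "\<dots> \<le> M\<^sup>2 * (norm x)\<^sup>2"
      by (rule mult_left_mono[OF bessel(2)[OF ou]]) simp
    also have "\<dots> = (norm x * \<bar>M\<bar>)\<^sup>2" by (simp add: power_mult_distrib)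
    finally show ?thesis by (rule power2_le_imp_le) simp
  qed
  have bl: "bounded_linear f"
    by (rule bounded_linear_intro[OF add scl nrm])
  show ?thesis
  proof (intro exI)
    show "op_series I \<beta> u v (blinfun_apply (Blinfun f))"
      unfolding op_series_def bounded_linear_Blinfun_apply[OF bl] using hs by blast
  qed
qed


lemma coef_bound:
  fixes \<alpha> b M :: real
  assumes "\<alpha> > 0" "0 \<le> b" "b \<le> M"
  shows "\<bar>b / (b\<^sup>2 + \<alpha>)\<bar> \<le> M / \<alpha>"
proof -
  have "b / (b\<^sup>2 + \<alpha>) \<le> b / \<alpha>"
  proof (rule divide_left_mono)
    show "\<alpha> \<le> b\<^sup>2 + \<alpha>" by simp
    show "0 \<le> b" by (rule assms(2))
    have "b\<^sup>2 + \<alpha> > 0" using assms(1) by (simp add: add_nonneg_pos)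
    then show "0 < (b\<^sup>2 + \<alpha>) * \<alpha>" using assms(1) by simp
  qed
  also have "\<dots> \<le> M / \<alpha>" using assms by (simp add: divide_right_mono)
  finally show ?thesis using assms by (simp add: add_pos_nonneg)
qed

lemma nsq: "(norm ((a::'a::real_inner) + b))\<^sup>2 = (norm a)\<^sup>2 + 2 * inner a b + (norm b)\<^sup>2"
  by (simp add: power2_norm_eq_inner inner_add_left inner_add_right inner_commute)

lemma arith_lemma:
  fixes K a L A Bn X H :: real
  assumes "K + a * L = 0"
  shows "(1/2) * (A + 2 * K + Bn) + (a/2) * (X + 2 * L + H) = ((1/2) * A + (a/2) * X) + (1/2) * Bn + (a/2) * H"
proof -
  have "(1/2) * (A + 2 * K + Bn) + (a/2) * (X + 2 * L + H) = ((1/2) * A + (a/2) * X) + (1/2) * Bn + (a/2) * H + (K + a * L)"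
    by (simp add: distrib_left)
  then show ?thesis using assms by simp
qed

lemma tik_formula:
  fixes u :: "'i \<Rightarrow> 'a::{real_inner,complete_space}" and v :: "'i \<Rightarrow> 'b::{real_inner,complete_space}"
    and B :: "'a \<Rightarrow>\<^sub>L 'b"
  assumes ou: "orthonormal_on I u" and ov: "orthonormal_on I v" and a0: "\<alpha> > 0"
    and bnd: "\<And>i. i \<in> I \<Longrightarrow> 0 \<le> \<beta> i \<and> \<beta> i \<le> M"
    and opB: "op_series I \<beta> u v (blinfun_apply B)"
  shows "((\<lambda>i. (\<beta> i / ((\<beta> i)\<^sup>2 + \<alpha>) * inner (v i) y) *\<^sub>R u i) has_sum tik_sol \<alpha> B y) I"
proof -
  define c where "c i = \<beta> i / ((\<beta> i)\<^sup>2 + \<alpha>) * inner (v i) y" for i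
  have "(\<lambda>i. c i *\<^sub>R u i) summable_on I"
    unfolding c_def
    by (rule orth_summable[OF ou sq_comparison_summable[OF ov]]) (use coef_bound[OF a0] bnd in blast)
  then obtain xs where hx: "((\<lambda>i. c i *\<^sub>R u i) has_sum xs) I"
    unfolding summable_on_def by blast
  have pick: "inner (u i) xs = c i" if "i \<in> I" for i
    by (rule on_pick[OF ou hx that])
  have Bv: "inner (v i) (B x) = \<beta> i * inner (u i) x" if "i \<in> I" for i x
  proof -
    have "((\<lambda>k. (\<beta> k * inner (u k) x) *\<^sub>R v k) has_sum B x) I"
      using opB unfolding op_series_def by blast
    from on_pick[OF ov this that] show ?thesis by simp
  qed
  have ceq: "c i * ((\<beta> i)\<^sup>2 + \<alpha>) = \<beta> i * inner (v i) y" if "i \<in> I" for i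
  proof -
    have "(\<beta> i)\<^sup>2 + \<alpha> > 0" using a0 by (simp add: add_nonneg_pos)
    then show ?thesis unfolding c_def by simp
  qed
  have key: "inner (B xs - y) (B h) + \<alpha> * inner xs h = 0" for h
  proof -
    have h1: "((\<lambda>i. inner (B xs - y) ((\<beta> i * inner (u i) h) *\<^sub>R v i)) has_sum inner (B xs - y) (B h)) I"
      by (rule has_sum_bounded_linear[OF bounded_linear_inner_right]) (use opB in \<open>simp add: op_series_def\<close>)
    have h2: "((\<lambda>i. \<alpha> * inner (c i *\<^sub>R u i) h) has_sum (\<alpha> * inner xs h)) I"
      by (rule has_sum_cmult_right[OF has_sum_bounded_linear[OF bounded_linear_inner_left hx]])
    have h3: "((\<lambda>i. inner (B xs - y) ((\<beta> i * inner (u i) h) *\<^sub>R v i) + \<alpha> * inner (c i *\<^sub>R u i) h)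
        has_sum (inner (B xs - y) (B h) + \<alpha> * inner xs h)) I"
      by (rule has_sum_add[OF h1 h2])
    have "inner (B xs - y) ((\<beta> i * inner (u i) h) *\<^sub>R v i) + \<alpha> * inner (c i *\<^sub>R u i) h = 0"
      if i: "i \<in> I" for i
    proof -
      have "inner (B xs - y) ((\<beta> i * inner (u i) h) *\<^sub>R v i)
          = \<beta> i * inner (u i) h * (inner (v i) (B xs) - inner (v i) y)"
        by (simp add: inner_diff_left inner_commute algebra_simps)
      also have "\<dots> = \<beta> i * inner (u i) h * (\<beta> i * c i - inner (v i) y)"
        using Bv[OF i] pick[OF i] by simp
      finally have "inner (B xs - y) ((\<beta> i * inner (u i) h) *\<^sub>R v i) + \<alpha> * inner (c i *\<^sub>R u i) h
          = inner (u i) h * (c i * ((\<beta> i)\<^sup>2 + \<alpha>) - \<beta> i * inner (v i) y)"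
        by (simp add: inner_commute algebra_simps power2_eq_square)
      then show ?thesis using ceq[OF i] by simp
    qed
    then have "((\<lambda>i. inner (B xs - y) ((\<beta> i * inner (u i) h) *\<^sub>R v i) + \<alpha> * inner (c i *\<^sub>R u i) h)
        has_sum 0) I"
      by (rule has_sum_0)
    from has_sum_unique[OF h3 this] show ?thesis .
  qed
  define J where "J z = (1/2) * (norm (blinfun_apply B z - y))\<^sup>2 + (\<alpha>/2) * (norm z)\<^sup>2" for z
  have expand: "J z = J xs + (1/2) * (norm (B (z - xs)))\<^sup>2 + (\<alpha>/2) * (norm (z - xs))\<^sup>2" for z
  proof -
    define h where "h = z - xs"
    have z: "z = xs + h" by (simp add: h_def)
    have eq: "B z - y = (B xs - y) + B h" by (simp add: z blinfun.add_right)
    have n1: "(norm (B z - y))\<^sup>2 = (norm (B xs - y))\<^sup>2 + 2 * inner (B xs - y) (B h) + (norm (B h))\<^sup>2"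
      unfolding eq by (rule nsq)
    have n2: "(norm z)\<^sup>2 = (norm xs)\<^sup>2 + 2 * inner xs h + (norm h)\<^sup>2"
      unfolding z by (rule nsq)
    show ?thesis unfolding J_def h_def[symmetric] n1 n2
      by (rule arith_lemma[OF key[of h]])
  qed
  have min: "\<forall>z. J xs \<le> J z"
  proof
    fix z
    have "0 \<le> (1/2) * (norm (B (z - xs)))\<^sup>2" by simp
    moreover have "0 \<le> (\<alpha>/2) * (norm (z - xs))\<^sup>2" using a0 by simp
    ultimately show "J xs \<le> J z" using expand[of z] by linarith
  qed
  have uniq: "x = xs" if "\<forall>z. J x \<le> J z" for x
  proof -
    have "J x \<le> J xs" using that by blast
    moreover have "0 \<le> (1/2) * (norm (B (x - xs)))\<^sup>2" by simp
    ultimately have "(\<alpha>/2) * (norm (x - xs))\<^sup>2 \<le> 0"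
      using expand[of x] by linarith
    then have "(norm (x - xs))\<^sup>2 \<le> 0" using a0
      by (simp add: mult_le_0_iff)
    then show ?thesis by simp
  qed
  have th: "(THE x. \<forall>z. J x \<le> J z) = xs"
    by (rule the_equality[where P="\<lambda>x. \<forall>z. J x \<le> J z", OF min uniq])
  have "tik_sol \<alpha> B y = (THE x. \<forall>z. J x \<le> J z)"
    unfolding tik_sol_def J_def by (rule refl)
  then have "tik_sol \<alpha> B y = xs" using th by simp
  then show ?thesis using hx unfolding c_def by simp
qed


lemma beta_alpha_fixed:
  fixes \<alpha> s :: real
  assumes "\<alpha> > 0" "s \<ge> 2 * sqrt \<alpha>"
  shows "s * beta_alpha \<alpha> s = (beta_alpha \<alpha> s)\<^sup>2 + \<alpha>"
proof -
  define r where "r = sqrt (s\<^sup>2 / 4 - \<alpha>)"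
  have sa: "(sqrt \<alpha>)\<^sup>2 = \<alpha>" using assms(1) by simp
  have "s\<^sup>2 \<ge> (2 * sqrt \<alpha>)\<^sup>2"
    using assms by (intro power_mono) auto
  then have "s\<^sup>2 / 4 - \<alpha> \<ge> 0" using sa by (simp add: power_mult_distrib)
  then have r2: "r\<^sup>2 = s\<^sup>2 / 4 - \<alpha>" unfolding r_def by simp
  have "beta_alpha \<alpha> s = s/2 + r" using assms unfolding beta_alpha_def r_def by simp
  then show ?thesis using r2 by (simp add: power2_eq_square algebra_simps)
qed

lemma g_bound:
  fixes \<alpha> s b :: real
  assumes "\<alpha> > 0" "s > 0" "b \<ge> 0"
  shows "s * b / (b\<^sup>2 + \<alpha>) \<le> s / (2 * sqrt \<alpha>)"
proof -
  have sa: "(sqrt \<alpha>)\<^sup>2 = \<alpha>" using assms(1) by simp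
  have pos: "b\<^sup>2 + \<alpha> > 0" using assms by (simp add: add_nonneg_pos)
  have q: "0 < sqrt \<alpha>" using assms by simp
  have "2 * b * sqrt \<alpha> \<le> b\<^sup>2 + \<alpha>"
  proof -
    have "0 \<le> (b - sqrt \<alpha>)\<^sup>2" by simp
    also have "\<dots> = b\<^sup>2 + \<alpha> - 2 * b * sqrt \<alpha>" using sa by (simp add: power2_diff)
    finally show ?thesis by simp
  qed
  then have "s * (2 * b * sqrt \<alpha>) \<le> s * (b\<^sup>2 + \<alpha>)"
    by (rule mult_left_mono) (use assms in simp)
  then have le: "(s * b) * (2 * sqrt \<alpha>) \<le> s * (b\<^sup>2 + \<alpha>)" by (simp add: mult_ac)
  have "s * b / (b\<^sup>2 + \<alpha>) \<le> s / (2 * sqrt \<alpha>) \<longleftrightarrow> (s * b) * (2 * sqrt \<alpha>) \<le> s * (b\<^sup>2 + \<alpha>)"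
    using pos q by (simp add: divide_le_eq le_divide_eq mult_ac)
  then show ?thesis using le by blast
qed

lemma per_i_ineq:
  fixes \<alpha> s b :: real
  assumes a: "\<alpha> > 0" and s: "s > 0" and b: "b \<ge> 0"
  shows "(s * beta_alpha \<alpha> s / ((beta_alpha \<alpha> s)\<^sup>2 + \<alpha>))\<^sup>2 - 2 * (s * beta_alpha \<alpha> s / ((beta_alpha \<alpha> s)\<^sup>2 + \<alpha>))
       \<le> (s * b / (b\<^sup>2 + \<alpha>))\<^sup>2 - 2 * (s * b / (b\<^sup>2 + \<alpha>))"
proof -
  define g where "g t = s * t / (t\<^sup>2 + \<alpha>)" for t
  have id: "(g t)\<^sup>2 - 2 * g t = (1 - g t)\<^sup>2 - 1" for t by (simp add: power2_diff)
  have "(1 - g (beta_alpha \<alpha> s))\<^sup>2 \<le> (1 - g b)\<^sup>2"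
  proof (cases "s \<ge> 2 * sqrt \<alpha>")
    case True
    have pos: "(beta_alpha \<alpha> s)\<^sup>2 + \<alpha> > 0" using a by (simp add: add_nonneg_pos)
    have "g (beta_alpha \<alpha> s) = 1"
      unfolding g_def using beta_alpha_fixed[OF a True] pos by simp
    then show ?thesis by simp
  next
    case False
    have q: "0 < sqrt \<alpha>" using a by simp
    have ba: "beta_alpha \<alpha> s = sqrt \<alpha>" using False unfolding beta_alpha_def by simp
    have ga: "g (beta_alpha \<alpha> s) = s / (2 * sqrt \<alpha>)"
      unfolding g_def ba using a q by (simp add: power2_eq_square divide_simps)
    have lt1: "s / (2 * sqrt \<alpha>) < 1" using False q by simp
    have gb: "g b \<le> s / (2 * sqrt \<alpha>)" unfolding g_def by (rule g_bound[OF a s b])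
    have "0 \<le> 1 - s / (2 * sqrt \<alpha>)" using lt1 by simp
    moreover have "1 - s / (2 * sqrt \<alpha>) \<le> 1 - g b" using gb by simp
    ultimately show ?thesis unfolding ga by (intro power_mono) auto
  qed
  then show ?thesis using id[of "beta_alpha \<alpha> s"] id[of b] unfolding g_def by linarith
qed


lemma beta_alpha_bounds:
  fixes \<alpha> s :: real
  assumes a: "\<alpha> > 0" and s: "s > 0"
  shows "0 \<le> beta_alpha \<alpha> s" "beta_alpha \<alpha> s \<le> max s (sqrt \<alpha>)"
proof -
  have "0 \<le> beta_alpha \<alpha> s \<and> beta_alpha \<alpha> s \<le> max s (sqrt \<alpha>)"
  proof (cases "s \<ge> 2 * sqrt \<alpha>")
    case True
    define r where "r = sqrt (s\<^sup>2 / 4 - \<alpha>)"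
    have sa: "(sqrt \<alpha>)\<^sup>2 = \<alpha>" using a by simp
    have "s\<^sup>2 \<ge> (2 * sqrt \<alpha>)\<^sup>2"
      using True a by (intro power_mono) auto
    then have nn: "s\<^sup>2 / 4 - \<alpha> \<ge> 0" using sa by (simp add: power_mult_distrib)
    then have r2: "r\<^sup>2 = s\<^sup>2 / 4 - \<alpha>" unfolding r_def by simp
    have r0: "r \<ge> 0" unfolding r_def using nn by simp
    have "r\<^sup>2 \<le> (s/2)\<^sup>2" using r2 a by (simp add: power_divide)
    then have "r \<le> s/2" by (rule power2_le_imp_le) (use s in simp)
    moreover have "beta_alpha \<alpha> s = s/2 + r" using True unfolding beta_alpha_def r_def by simp
    ultimately show ?thesis using r0 s by simp
  next
    case False
    then show ?thesis unfolding beta_alpha_def using a by simp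
  qed
  then show "0 \<le> beta_alpha \<alpha> s" "beta_alpha \<alpha> s \<le> max s (sqrt \<alpha>)" by auto
qed

lemma sq_arith: "((G::real) * a)\<^sup>2 + -2 * (G * a * a) = (G\<^sup>2 - 2 * G) * a\<^sup>2"
  by (simp add: power2_eq_square algebra_simps)

lemma lin2: "(x::real) = 2 * ((1/2) * (x + Y)) - Y"
  by (simp add: algebra_simps)

lemma nsq_diff: "(norm ((a::'a::real_inner) - b))\<^sup>2 = (norm a)\<^sup>2 + -2 * inner a b + (norm b)\<^sup>2"
  by (simp add: power2_norm_eq_inner inner_diff_left inner_diff_right inner_commute)

lemma F_formula:
  fixes u :: "'i \<Rightarrow> 'a::{real_inner,complete_space}" and v :: "'i \<Rightarrow> 'b::{real_inner,complete_space}"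
    and A B :: "'a \<Rightarrow>\<^sub>L 'b"
  assumes ou: "orthonormal_on I u" and ov: "orthonormal_on I v" and a0: "\<alpha> > 0"
    and bnd: "\<And>i. i \<in> I \<Longrightarrow> 0 \<le> \<beta> i \<and> \<beta> i \<le> M"
    and opB: "op_series I \<beta> u v (blinfun_apply B)"
    and opA: "op_series I \<sigma> u v (blinfun_apply A)"
  shows "((\<lambda>i. ((\<sigma> i * \<beta> i / ((\<beta> i)\<^sup>2 + \<alpha>))\<^sup>2 - 2 * (\<sigma> i * \<beta> i / ((\<beta> i)\<^sup>2 + \<alpha>))) * (inner (v i) y)\<^sup>2)
          has_sum (2 * F_obj \<alpha> A y B - (norm y)\<^sup>2)) I"
proof -
  define xs where "xs = tik_sol \<alpha> B y"
  define c where "c i = \<beta> i / ((\<beta> i)\<^sup>2 + \<alpha>) * inner (v i) y" for i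
  have hx: "((\<lambda>i. c i *\<^sub>R u i) has_sum xs) I"
    unfolding c_def xs_def by (rule tik_formula[OF ou ov a0 bnd opB])
  have pick: "inner (u i) xs = c i" if "i \<in> I" for i
    by (rule on_pick[OF ou hx that])
  have hA0: "((\<lambda>i. (\<sigma> i * inner (u i) xs) *\<^sub>R v i) has_sum A xs) I"
    using opA unfolding op_series_def by blast
  have "((\<lambda>i. (\<sigma> i * inner (u i) xs) *\<^sub>R v i) has_sum A xs) I \<longleftrightarrow> ((\<lambda>i. (\<sigma> i * c i) *\<^sub>R v i) has_sum A xs) I"
    by (rule has_sum_cong) (simp add: pick)
  with hA0 have hA: "((\<lambda>i. (\<sigma> i * c i) *\<^sub>R v i) has_sum A xs) I" by blast
  have n: "((\<lambda>i. (\<sigma> i * c i)\<^sup>2) has_sum (norm (A xs))\<^sup>2) I"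
    by (rule on_norm_has_sum[OF ov hA])
  have ip: "((\<lambda>i. inner ((\<sigma> i * c i) *\<^sub>R v i) y) has_sum inner (A xs) y) I"
    by (rule has_sum_bounded_linear[OF bounded_linear_inner_left hA])
  have ip2: "((\<lambda>i. -2 * inner ((\<sigma> i * c i) *\<^sub>R v i) y) has_sum (-2 * inner (A xs) y)) I"
    by (rule has_sum_cmult_right[OF ip])
  have tot: "((\<lambda>i. (\<sigma> i * c i)\<^sup>2 + -2 * inner ((\<sigma> i * c i) *\<^sub>R v i) y)
      has_sum ((norm (A xs))\<^sup>2 + -2 * inner (A xs) y)) I"
    by (rule has_sum_add[OF n ip2])
  have val: "(norm (A xs))\<^sup>2 + -2 * inner (A xs) y = 2 * F_obj \<alpha> A y B - (norm y)\<^sup>2"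
    unfolding F_obj_def xs_def[symmetric] nsq_diff by (rule lin2)
  have teq: "(\<sigma> i * c i)\<^sup>2 + -2 * inner ((\<sigma> i * c i) *\<^sub>R v i) y
      = ((\<sigma> i * \<beta> i / ((\<beta> i)\<^sup>2 + \<alpha>))\<^sup>2 - 2 * (\<sigma> i * \<beta> i / ((\<beta> i)\<^sup>2 + \<alpha>))) * (inner (v i) y)\<^sup>2" for i
  proof -
    have sc: "\<sigma> i * c i = (\<sigma> i * \<beta> i / ((\<beta> i)\<^sup>2 + \<alpha>)) * inner (v i) y"
      unfolding c_def by simp
    have e1: "inner ((\<sigma> i * c i) *\<^sub>R v i) y = (\<sigma> i * c i) * inner (v i) y" by simp
    have "(\<sigma> i * c i)\<^sup>2 + -2 * inner ((\<sigma> i * c i) *\<^sub>R v i) y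
       = ((\<sigma> i * \<beta> i / ((\<beta> i)\<^sup>2 + \<alpha>)) * inner (v i) y)\<^sup>2
         + -2 * ((\<sigma> i * \<beta> i / ((\<beta> i)\<^sup>2 + \<alpha>)) * inner (v i) y * inner (v i) y)"
      unfolding e1 unfolding sc by (rule refl)
    also have "\<dots> = ((\<sigma> i * \<beta> i / ((\<beta> i)\<^sup>2 + \<alpha>))\<^sup>2 - 2 * (\<sigma> i * \<beta> i / ((\<beta> i)\<^sup>2 + \<alpha>))) * (inner (v i) y)\<^sup>2"
      by (rule sq_arith)
    finally show ?thesis .
  qed
  show ?thesis using tot unfolding teq val .
qed

theorem theorem1:
  fixes A :: "'a::{real_inner,complete_space} \<Rightarrow>\<^sub>L 'b::{real_inner,complete_space}"
    and I :: "'i set" and \<sigma> :: "'i \<Rightarrow> real" and u :: "'i \<Rightarrow> 'a" and v :: "'i \<Rightarrow> 'b"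
    and \<alpha> :: real
  assumes "compact_operator A"
    and "singular_system A I \<sigma> u v"
    and "\<alpha> > 0"
  shows "\<exists>B\<alpha>. op_series I (\<lambda>i. beta_alpha \<alpha> (\<sigma> i)) u v (blinfun_apply B\<alpha>) \<and>
              B\<alpha> \<in> class_B I u v \<and>
              (\<forall>y\<delta>. \<forall>B\<in>class_B I u v. F_obj \<alpha> A y\<delta> B\<alpha> \<le> F_obj \<alpha> A y\<delta> B)"
proof -
  note ss = assms(2)[unfolded singular_system_def]
  have spos: "\<And>i. i \<in> I \<Longrightarrow> \<sigma> i > 0" using ss by blast
  have ou: "orthonormal_on I u" and ov: "orthonormal_on I v" using ss by blast+
  have Au: "\<And>i. i \<in> I \<Longrightarrow> A (u i) = \<sigma> i *\<^sub>R v i" using ss by blast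
  have opA: "op_series I \<sigma> u v (blinfun_apply A)" using ss by blast
  have a0: "\<alpha> > 0" by (rule assms(3))
  have nu: "norm (u i) = 1" if "i \<in> I" for i
    using ou that unfolding orthonormal_on_def by (simp add: norm_eq_sqrt_inner)
  have nv: "norm (v i) = 1" if "i \<in> I" for i
    using ov that unfolding orthonormal_on_def by (simp add: norm_eq_sqrt_inner)
  have sbd: "\<sigma> i \<le> norm A" if i: "i \<in> I" for i
  proof -
    have "\<sigma> i = norm (A (u i))" using Au[OF i] nv[OF i] spos[OF i] by simp
    also have "\<dots> \<le> norm A * norm (u i)" by (rule norm_blinfun)
    also have "\<dots> = norm A" using nu[OF i] by simp
    finally show ?thesis .
  qed
  define M where "M = max (norm A) (sqrt \<alpha>)"
  have babd: "0 \<le> beta_alpha \<alpha> (\<sigma> i) \<and> beta_alpha \<alpha> (\<sigma> i) \<le> M" if i: "i \<in> I" for i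
  proof -
    have "beta_alpha \<alpha> (\<sigma> i) \<le> max (\<sigma> i) (sqrt \<alpha>)" by (rule beta_alpha_bounds(2)[OF a0 spos[OF i]])
    also have "\<dots> \<le> M" unfolding M_def using sbd[OF i] by simp
    finally show ?thesis using beta_alpha_bounds(1)[OF a0 spos[OF i]] by simp
  qed
  obtain B\<alpha> :: "'a \<Rightarrow>\<^sub>L 'b" where opBa: "op_series I (\<lambda>i. beta_alpha \<alpha> (\<sigma> i)) u v (blinfun_apply B\<alpha>)"
    using series_op_exists[OF ou ov, of "\<lambda>i. beta_alpha \<alpha> (\<sigma> i)" M] babd by fastforce
  have inB: "B\<alpha> \<in> class_B I u v"
    unfolding class_B_def
  proof (intro CollectI exI conjI ballI)
    show "op_series I (\<lambda>i. beta_alpha \<alpha> (\<sigma> i)) u v (blinfun_apply B\<alpha>)" by (rule opBa)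
    show "bdd_above ((\<lambda>i. beta_alpha \<alpha> (\<sigma> i)) ` I)"
      by (rule bdd_aboveI[where M=M]) (use babd in auto)
    fix i assume "i \<in> I" then show "0 \<le> beta_alpha \<alpha> (\<sigma> i)" using babd by blast
  qed
  have opt: "F_obj \<alpha> A y B\<alpha> \<le> F_obj \<alpha> A y B" if B: "B \<in> class_B I u v" for y B
  proof -
    obtain \<beta> where b0: "\<forall>i\<in>I. 0 \<le> \<beta> i" and bb: "bdd_above (\<beta> ` I)"
      and opB: "op_series I \<beta> u v (blinfun_apply B)"
      using B unfolding class_B_def by blast
    obtain Mb where Mb: "\<And>x. x \<in> \<beta> ` I \<Longrightarrow> x \<le> Mb" using bb unfolding bdd_above_def by blast
    have bnd: "0 \<le> \<beta> i \<and> \<beta> i \<le> Mb" if "i \<in> I" for i using b0 Mb that by blast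
    note h1 = F_formula[OF ou ov a0 babd opBa opA, of y]
    note h2 = F_formula[OF ou ov a0 bnd opB opA, of y]
    have "2 * F_obj \<alpha> A y B\<alpha> - (norm y)\<^sup>2 \<le> 2 * F_obj \<alpha> A y B - (norm y)\<^sup>2"
    proof (rule has_sum_mono[OF h1 h2])
      fix i assume i: "i \<in> I"
      show "((\<sigma> i * beta_alpha \<alpha> (\<sigma> i) / ((beta_alpha \<alpha> (\<sigma> i))\<^sup>2 + \<alpha>))\<^sup>2 - 2 * (\<sigma> i * beta_alpha \<alpha> (\<sigma> i) / ((beta_alpha \<alpha> (\<sigma> i))\<^sup>2 + \<alpha>))) * (inner (v i) y)\<^sup>2
          \<le> ((\<sigma> i * \<beta> i / ((\<beta> i)\<^sup>2 + \<alpha>))\<^sup>2 - 2 * (\<sigma> i * \<beta> i / ((\<beta> i)\<^sup>2 + \<alpha>))) * (inner (v i) y)\<^sup>2"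
        by (rule mult_right_mono[OF per_i_ineq[OF a0 spos[OF i]]]) (use bnd[OF i] in simp_all)
    qed
    then show ?thesis by simp
  qed
  show ?thesis using opBa inB opt by blast
qed

end
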